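(* Let $g\geq 1$ and let $\ell\geq 5$ be prime. The kernel of the homomorphism $\Psi:\operatorname{Aut}(\operatorname{GSp}_{2g}(\mathbb{F}_\ell))\to\operatorname{Aut}(\operatorname{GSp}_{2g}(\mathbb{F}_\ell)/\{\pm I\})$ is $\{\operatorname{id},\chi_{(\ell-1)/2}\}$.
   Context: For $\ell\geq 5$, $\{\pm I\}$ is a characteristic subgroup of $\operatorname{GSp}_{2g}(\mathbb{F}_\ell)$, so each automorphism of $\operatorname{GSp}_{2g}(\mathbb{F}_\ell)$ induces an automorphism of the quotient $\operatorname{GSp}_{2g}(\mathbb{F}_\ell)/\{\pm I\}$; $\Psi$ is the resulting homomorphism. $\chi_{(\ell-1)/2}$ is the automorphism $\gamma\mapsto\operatorname{mult}(\gamma)^{(\ell-1)/2}\gamma$, where $\operatorname{mult}$ is the multiplier. *)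

theory Defs
  imports "Berlekamp_Zassenhaus.Finite_Field" "Jordan_Normal_Form.Matrix" "HOL-Algebra.Coset" "HOL-Algebra.Bij"
begin

text \<open>Standard symplectic form J = [[0, I_g], [-I_g, 0]] of size 2g.\<close>
definition sympJ :: "nat \<Rightarrow> 'a::comm_ring_1 mat" where
  "sympJ g = mat (2*g) (2*g) (\<lambda>(i,j).
      if i < g \<and> j = i + g then 1
      else if g \<le> i \<and> j + g = i then -1 else 0)"

definition GSp_carrier :: "nat \<Rightarrow> 'a::field mat set" where
  "GSp_carrier g = {A \<in> carrier_mat (2*g) (2*g).
      \<exists>c. c \<noteq> 0 \<and> transpose_mat A * sympJ g * A = c \<cdot>\<^sub>m sympJ g}"

definition GSp :: "nat \<Rightarrow> ('a::field mat) monoid" where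
  "GSp g = \<lparr> carrier = GSp_carrier g, monoid.mult = (\<lambda>A B. A * B), one = 1\<^sub>m (2*g) \<rparr>"

definition multiplier :: "nat \<Rightarrow> 'a::field mat \<Rightarrow> 'a" where
  "multiplier g A = (THE c. transpose_mat A * sympJ g * A = c \<cdot>\<^sub>m sympJ g)"

definition chi :: "nat \<Rightarrow> nat \<Rightarrow> 'a::field mat \<Rightarrow> 'a mat" where
  "chi g k A = (multiplier g A ^ k) \<cdot>\<^sub>m A"

definition pmI :: "nat \<Rightarrow> 'a::field mat set" where
  "pmI g = {1\<^sub>m (2*g), - 1\<^sub>m (2*g)}"

definition Psi :: "nat \<Rightarrow> ('a::field mat \<Rightarrow> 'a mat) \<Rightarrow> 'a mat set \<Rightarrow> 'a mat set" where
  "Psi g \<sigma> = (\<lambda>C \<in> carrier (GSp g Mod pmI g). \<sigma> ` C)"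

end

theory Submission
  imports Defs "HOL-Number_Theory.Euler_Criterion"
begin


definition omega :: "nat \<Rightarrow> 'a::field vec \<Rightarrow> 'a vec \<Rightarrow> 'a" where
  "omega g x y = x \<bullet> (sympJ g *\<^sub>v y)"

lemma sympJ_carrier[simp]: "sympJ g \<in> carrier_mat (2*g) (2*g)"
  by (simp add: sympJ_def)

lemma dim_sympJ[simp]: "dim_row (sympJ g) = 2*g" "dim_col (sympJ g) = 2*g"
  by (simp_all add: sympJ_def)

lemma Jv_carrier[simp]: "sympJ g *\<^sub>v x \<in> carrier_vec (2*g)"
  by (intro carrier_vecI) simp

lemma sympJ_index: "i < 2*g \<Longrightarrow> j < 2*g \<Longrightarrow> sympJ g $$ (i,j) =
   (if i < g \<and> j = i + g then 1 else if g \<le> i \<and> j + g = i then -1 else 0)"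
  by (simp add: sympJ_def)

lemma Jvec:
  assumes x: "(x::'a::field vec) \<in> carrier_vec (2*g)" and k: "k < 2*g"
  shows "(sympJ g *\<^sub>v x) $ k = (if k < g then x $ (k+g) else - (x $ (k-g)))"
proof -
  have "(sympJ g *\<^sub>v x) $ k = (\<Sum>j\<in>{0..<2*g}. sympJ g $$ (k,j) * x $ j)"
    using x k by (simp add: scalar_prod_def row_def)
  also have "\<dots> = (\<Sum>j\<in>{0..<2*g}. if j = (if k < g then k+g else k-g) then
        (if k < g then x $ j else - (x $ j)) else 0)"
    using k by (intro sum.cong refl) (auto simp: sympJ_index)
  also have "\<dots> = (if k < g then x $ (k+g) else - (x $ (k-g)))"
    using k by (simp add: sum.delta, linarith)
  finally show ?thesis .
qed

lemma sum_split2: "(\<Sum>k<2*(g::nat). h k) = (\<Sum>k<g. h k + h (k+g))"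
proof -
  have "(\<Sum>k<2*g. h k) = (\<Sum>k\<in>{0..<2*g}. h k)" by (simp only: atLeast0LessThan)
  also have "\<dots> = sum h {0..<g} + sum h {g..<2*g}" by (rule sum.atLeastLessThan_concat[symmetric]) auto
  also have "{g..<2*g} = {0+g..<g+g}" by (simp only: mult_2 add_0)
  also have "sum h {0+g..<g+g} = sum (\<lambda>k. h (k+g)) {0..<g}" by (rule sum.shift_bounds_nat_ivl)
  finally show ?thesis by (simp only: sum.distrib atLeast0LessThan)
qed

lemma omega_explicit:
  assumes x: "(x::'a::field vec) \<in> carrier_vec (2*g)" and y: "y \<in> carrier_vec (2*g)"
  shows "omega g x y = (\<Sum>k<g. x$k * y$(k+g) - x$(k+g) * y$k)"
proof -
  have "omega g x y = (\<Sum>k<2*g. x $ k * (sympJ g *\<^sub>v y) $ k)"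
    using x y by (simp add: omega_def scalar_prod_def atLeast0LessThan)
  also have "\<dots> = (\<Sum>k<g. x $ k * (sympJ g *\<^sub>v y) $ k + x $ (k+g) * (sympJ g *\<^sub>v y) $ (k+g))"
    by (rule sum_split2)
  also have "\<dots> = (\<Sum>k<g. x$k * y$(k+g) - x$(k+g) * y$k)"
    using y by (intro sum.cong refl) (simp add: Jvec del: index_mult_mat_vec)
  finally show ?thesis .
qed

lemma omega_skew: assumes x: "x \<in> carrier_vec (2*g)" and y: "y \<in> carrier_vec (2*g)"
  shows "omega g y x = - omega g x y"
  unfolding omega_explicit[OF y x] omega_explicit[OF x y] sum_negf[symmetric]
  by (rule sum.cong) (simp_all add: mult.commute)

lemma omega_self[simp]: assumes x: "x \<in> carrier_vec (2*g)" shows "omega g x x = 0"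
  unfolding omega_explicit[OF x x] by (simp add: mult.commute)

lemma omega_add_right: "x \<in> carrier_vec (2*g) \<Longrightarrow> y \<in> carrier_vec (2*g) \<Longrightarrow> z \<in> carrier_vec (2*g) \<Longrightarrow>
  omega g x (y + z) = omega g x y + omega g x z"
  unfolding omega_def by (simp add: mult_add_distrib_mat_vec[of _ "2*g" "2*g"], rule scalar_prod_add_distrib[of _ "2*g"], auto)

lemma omega_add_left: "x \<in> carrier_vec (2*g) \<Longrightarrow> y \<in> carrier_vec (2*g) \<Longrightarrow> z \<in> carrier_vec (2*g) \<Longrightarrow>
  omega g (x + y) z = omega g x z + omega g y z"
  unfolding omega_def by (rule add_scalar_prod_distrib[of _ "2*g"], auto)

lemma omega_smult_right: "x \<in> carrier_vec (2*g) \<Longrightarrow> y \<in> carrier_vec (2*g) \<Longrightarrow>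
  omega g x (c \<cdot>\<^sub>v y) = c * omega g x y"
  unfolding omega_def by (simp add: mult_mat_vec[of _ "2*g" "2*g"])

lemma omega_smult_left: "x \<in> carrier_vec (2*g) \<Longrightarrow> y \<in> carrier_vec (2*g) \<Longrightarrow>
  omega g (c \<cdot>\<^sub>v x) y = c * omega g x y"
  unfolding omega_def by simp

lemma omega_minus_right: assumes x: "x \<in> carrier_vec (2*g)" and y: "y \<in> carrier_vec (2*g)" and z: "z \<in> carrier_vec (2*g)"
  shows "omega g x (y - z) = omega g x y - omega g x z"
proof -
  have yz: "y - z \<in> carrier_vec (2*g)" using y z by simp
  show ?thesis
  unfolding omega_explicit[OF x y] omega_explicit[OF x z] omega_explicit[OF x yz] sum_subtractf[symmetric]
  using y z by (intro sum.cong refl) (auto simp: algebra_simps carrier_vecD)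
qed

lemma omega_minus_left: assumes x: "x \<in> carrier_vec (2*g)" and y: "y \<in> carrier_vec (2*g)" and z: "z \<in> carrier_vec (2*g)"
  shows "omega g (x - y) z = omega g x z - omega g y z"
proof -
  have xy: "x - y \<in> carrier_vec (2*g)" using x y by simp
  show ?thesis
  unfolding omega_explicit[OF x z] omega_explicit[OF y z] omega_explicit[OF xy z] sum_subtractf[symmetric]
  using x y by (intro sum.cong refl) (auto simp: algebra_simps carrier_vecD)
qed

lemma omega_unit: assumes i: "i < 2*g" and j: "j < 2*g"
  shows "omega g (unit_vec (2*g) i) (unit_vec (2*g) j) = (sympJ g $$ (i,j) :: 'a::field)"
proof -
  have "omega g (unit_vec (2*g) i) (unit_vec (2*g) j) = (sympJ g *\<^sub>v unit_vec (2*g) j :: 'a vec) $ i"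
    unfolding omega_def by (rule scalar_prod_left_unit) (use i in auto)
  also have "\<dots> = (if i < g then unit_vec (2*g) j $ (i+g) else - (unit_vec (2*g) j $ (i-g)))"
    by (rule Jvec) (use i in auto)
  also have "\<dots> = sympJ g $$ (i,j)" using i j by (auto simp: sympJ_index)
  finally show ?thesis .
qed

lemma mult_unit_col: assumes A: "(A::'a::field mat) \<in> carrier_mat nr nc" and j: "j < nc"
  shows "A *\<^sub>v unit_vec nc j = col A j"
proof (rule eq_vecI)
  fix i assume "i < dim_vec (col A j)"
  hence i: "i < nr" using A by simp
  have "(A *\<^sub>v unit_vec nc j) $ i = row A i \<bullet> unit_vec nc j" using A i by simp
  also have "\<dots> = row A i $ j" by (rule scalar_prod_right_unit[OF j])
  also have "\<dots> = col A j $ i" using A i j by simp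
  finally show "(A *\<^sub>v unit_vec nc j) $ i = col A j $ i" .
qed (use A in simp)

lemma STJ_entry: assumes A: "A \<in> carrier_mat (2*g) (2*g)" and i: "i < 2*g" and j: "j < 2*g"
  shows "(transpose_mat A * sympJ g * A) $$ (i,j) = omega g (col A i) (col A j)"
proof -
  have "transpose_mat A * sympJ g * A = transpose_mat A * (sympJ g * A)"
    using A by (intro assoc_mult_mat[of _ "2*g" "2*g" _ "2*g" _ "2*g"]) auto
  hence "(transpose_mat A * sympJ g * A) $$ (i,j) = row (transpose_mat A) i \<bullet> col (sympJ g * A) j"
    using A i j by simp
  also have "\<dots> = col A i \<bullet> (sympJ g *\<^sub>v col A j)"
    using A i j by (simp add: col_mult2[of _ "2*g" "2*g" _ "2*g"])
  finally show ?thesis unfolding omega_def .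
qed

definition Sp :: "nat \<Rightarrow> 'a::field mat set" where
  "Sp g = {A \<in> carrier_mat (2*g) (2*g). transpose_mat A * sympJ g * A = sympJ g}"

lemma Sp_iff: assumes A: "A \<in> carrier_mat (2*g) (2*g)"
  shows "A \<in> Sp g \<longleftrightarrow> (\<forall>i<2*g. \<forall>j<2*g. omega g (col A i) (col A j) = (sympJ g $$ (i,j) :: 'a::field))"
proof
  assume "A \<in> Sp g"
  hence "transpose_mat A * sympJ g * A = sympJ g" by (simp add: Sp_def)
  thus "\<forall>i<2*g. \<forall>j<2*g. omega g (col A i) (col A j) = sympJ g $$ (i,j)"
    using STJ_entry[OF A] by metis
next
  assume h: "\<forall>i<2*g. \<forall>j<2*g. omega g (col A i) (col A j) = (sympJ g $$ (i,j) :: 'a::field)"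
  have "transpose_mat A * sympJ g * A = sympJ g"
    using A by (intro eq_matI) (simp_all del: index_mult_mat add: index_mult_mat(2,3) STJ_entry[OF A] h carrier_matD)
  thus "A \<in> Sp g" using A by (simp add: Sp_def)
qed

lemma Sp_carrier: "A \<in> Sp g \<Longrightarrow> A \<in> carrier_mat (2*g) (2*g)" by (simp add: Sp_def)

lemma scalar_transpose: assumes A: "(A::'a::field mat) \<in> carrier_mat n n" and x: "x \<in> carrier_vec n" and w: "w \<in> carrier_vec n"
  shows "(A *\<^sub>v x) \<bullet> w = x \<bullet> (transpose_mat A *\<^sub>v w)"
proof -
  have "(A *\<^sub>v x) \<bullet> w = w \<bullet> (A *\<^sub>v x)" using A x w by (intro comm_scalar_prod[of _ n]) auto
  also have "\<dots> = (transpose_mat A *\<^sub>v w) \<bullet> x" using transpose_vec_mult_scalar[OF A x w] by simp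
  also have "\<dots> = x \<bullet> (transpose_mat A *\<^sub>v w)" using A x w by (intro comm_scalar_prod[of _ n]) auto
  finally show ?thesis .
qed

lemma omega_Sp: assumes A: "A \<in> Sp g" and x: "x \<in> carrier_vec (2*g)" and y: "y \<in> carrier_vec (2*g)"
  shows "omega g (A *\<^sub>v x) (A *\<^sub>v y) = omega g x y"
proof -
  have Ac: "A \<in> carrier_mat (2*g) (2*g)" using A by (simp add: Sp_def)
  have "omega g (A *\<^sub>v x) (A *\<^sub>v y) = x \<bullet> (transpose_mat A *\<^sub>v (sympJ g *\<^sub>v (A *\<^sub>v y)))"
    unfolding omega_def using Ac x y by (intro scalar_transpose[of _ "2*g"]) auto
  also have "transpose_mat A *\<^sub>v (sympJ g *\<^sub>v (A *\<^sub>v y)) = (transpose_mat A * sympJ g * A) *\<^sub>v y"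
    using Ac y by (simp add: assoc_mult_mat_vec[of _ "2*g" "2*g" _ "2*g"])
  also have "transpose_mat A * sympJ g * A = sympJ g" using A by (simp add: Sp_def)
  finally show ?thesis unfolding omega_def .
qed

lemma Sp_mult: assumes A: "A \<in> Sp g" and B: "B \<in> Sp g" shows "A * B \<in> Sp g"
proof -
  have Ac: "A \<in> carrier_mat (2*g) (2*g)" and Bc: "B \<in> carrier_mat (2*g) (2*g)" using A B by (auto simp: Sp_def)
  have ABc: "A * B \<in> carrier_mat (2*g) (2*g)" using Ac Bc by simp
  show ?thesis unfolding Sp_iff[OF ABc]
  proof (intro allI impI)
    fix i j assume i: "i < 2*g" and j: "j < 2*g"
    have "omega g (col (A*B) i) (col (A*B) j) = omega g (A *\<^sub>v col B i) (A *\<^sub>v col B j)"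
      using Ac Bc i j by simp
    also have "\<dots> = omega g (col B i) (col B j)" using A Bc i j by (intro omega_Sp) auto
    also have "\<dots> = sympJ g $$ (i,j)" using B Bc i j by (simp add: Sp_iff)
    finally show "omega g (col (A*B) i) (col (A*B) j) = sympJ g $$ (i,j)" .
  qed
qed

definition rv :: "nat \<Rightarrow> 'a::field vec \<Rightarrow> 'a vec" where
  "rv g v = transpose_mat (sympJ g) *\<^sub>v v"

lemma omega_rv: "v \<in> carrier_vec (2*g) \<Longrightarrow> x \<in> carrier_vec (2*g) \<Longrightarrow> omega g v x = rv g v \<bullet> x"
  unfolding omega_def rv_def by (rule transpose_vec_mult_scalar[symmetric, of _ "2*g" "2*g"]) auto

definition transv :: "nat \<Rightarrow> 'a::field vec \<Rightarrow> 'a \<Rightarrow> 'a mat" where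
  "transv g v a = mat (2*g) (2*g) (\<lambda>(i,j). (if i = j then 1 else 0) + a * (v $ i * rv g v $ j))"

lemma dim_transv[simp]: "dim_row (transv g v a) = 2*g" "dim_col (transv g v a) = 2*g"
  by (simp_all add: transv_def)

lemma transv_carrier[simp]: "transv g v a \<in> carrier_mat (2*g) (2*g)" by (simp add: transv_def)

lemma transv_vec: assumes v: "v \<in> carrier_vec (2*g)" and x: "x \<in> carrier_vec (2*g)"
  shows "transv g v a *\<^sub>v x = x + (a * omega g v x) \<cdot>\<^sub>v v"
proof (rule eq_vecI)
  fix i assume "i < dim_vec (x + (a * omega g v x) \<cdot>\<^sub>v v)"
  hence i: "i < 2*g" using v x by simp
  have "(transv g v a *\<^sub>v x) $ i = (\<Sum>j\<in>{0..<2*g}. ((if i = j then 1 else 0) + a * (v $ i * rv g v $ j)) * x $ j)"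
    using i x by (simp add: transv_def scalar_prod_def row_def)
  also have "\<dots> = (\<Sum>j\<in>{0..<2*g}. (if i = j then x $ j else 0) + a * v $ i * (rv g v $ j * x $ j))"
    by (rule sum.cong) (auto simp: algebra_simps)
  also have "\<dots> = (\<Sum>j\<in>{0..<2*g}. (if i = j then x $ j else 0)) + a * v $ i * (\<Sum>j\<in>{0..<2*g}. rv g v $ j * x $ j)"
    by (simp only: sum.distrib sum_distrib_left)
  also have "(\<Sum>j\<in>{0..<2*g}. rv g v $ j * x $ j) = omega g v x"
    using v x by (simp add: omega_rv scalar_prod_def)
  also have "(\<Sum>j\<in>{0..<2*g}. (if i = j then x $ j else 0)) = x $ i" using i by simp
  finally show "(transv g v a *\<^sub>v x) $ i = (x + (a * omega g v x) \<cdot>\<^sub>v v) $ i"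
    using i v x by simp
qed (use v x in simp)

lemma transv_omega: assumes v: "v \<in> carrier_vec (2*g)" and x: "x \<in> carrier_vec (2*g)" and y: "y \<in> carrier_vec (2*g)"
  shows "omega g (transv g v a *\<^sub>v x) (transv g v a *\<^sub>v y) = omega g x y"
proof -
  have sk: "omega g x v = - omega g v x" using omega_skew[OF v x] by simp
  show ?thesis using v x y
    by (simp add: transv_vec omega_add_left omega_add_right omega_smult_left omega_smult_right sk algebra_simps)
qed

lemma transv_Sp: assumes v: "v \<in> carrier_vec (2*g)" shows "transv g v a \<in> Sp g"
  unfolding Sp_iff[OF transv_carrier]
proof (intro allI impI)
  fix i j assume i: "i < 2*g" and j: "j < 2*g"
  have "omega g (col (transv g v a) i) (col (transv g v a) j) =
        omega g (transv g v a *\<^sub>v unit_vec (2*g) i) (transv g v a *\<^sub>v unit_vec (2*g) j)"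
    using i j by (simp add: mult_unit_col[of _ "2*g" "2*g"])
  also have "\<dots> = omega g (unit_vec (2*g) i) (unit_vec (2*g) j)" using v by (intro transv_omega) auto
  also have "\<dots> = sympJ g $$ (i,j)" using i j by (rule omega_unit)
  finally show "omega g (col (transv g v a) i) (col (transv g v a) j) = sympJ g $$ (i,j)" .
qed

lemma transv_add: assumes v: "v \<in> carrier_vec (2*g)"
  shows "transv g v a * transv g v b = transv g v (a + b)"
proof (rule mat_col_eqI)
  fix j assume "j < dim_col (transv g v (a + b))"
  hence j: "j < 2*g" by simp
  define e where "e = (unit_vec (2*g) j :: 'a vec)"
  have e: "e \<in> carrier_vec (2*g)" unfolding e_def by simp
  have "col (transv g v a * transv g v b) j = transv g v a *\<^sub>v (transv g v b *\<^sub>v e)"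
    using j unfolding e_def by (simp add: mult_unit_col[of _ "2*g" "2*g"] col_mult2[of _ "2*g" "2*g" _ "2*g"])
  also have "\<dots> = e + (b * omega g v e) \<cdot>\<^sub>v v + (a * omega g v e) \<cdot>\<^sub>v v"
    using v e by (simp add: transv_vec omega_add_right omega_smult_right)
  also have "\<dots> = transv g v (a + b) *\<^sub>v e"
    using v e by (simp add: transv_vec) (intro eq_vecI, auto simp: algebra_simps)
  also have "\<dots> = col (transv g v (a + b)) j"
    using j unfolding e_def by (simp add: mult_unit_col[of _ "2*g" "2*g"])
  finally show "col (transv g v a * transv g v b) j = col (transv g v (a + b)) j" .
qed auto

lemma add_zero_smult[simp]: "x \<in> carrier_vec n \<Longrightarrow> v \<in> carrier_vec n \<Longrightarrow> x + (0::'a::field) \<cdot>\<^sub>v v = x"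
  by (intro eq_vecI) auto

lemma add_zero_smult_unit[simp]: "v \<in> carrier_vec n \<Longrightarrow> unit_vec n k + (0::'a::field) \<cdot>\<^sub>v v = unit_vec n k"
  by (intro eq_vecI) auto

definition Fs :: "nat \<Rightarrow> nat \<Rightarrow> nat set" where
  "Fs g m = {k. k < m \<or> (g \<le> k \<and> k < g + m)}"

definition Fixm :: "nat \<Rightarrow> nat \<Rightarrow> 'a::field mat \<Rightarrow> bool" where
  "Fixm g m A = (\<forall>k<2*g. k \<in> Fs g m \<longrightarrow> A *\<^sub>v unit_vec (2*g) k = unit_vec (2*g) k)"

definition orth :: "nat \<Rightarrow> nat \<Rightarrow> 'a::field vec \<Rightarrow> bool" where
  "orth g m x = (\<forall>k<2*g. k \<in> Fs g m \<longrightarrow> omega g (unit_vec (2*g) k) x = 0)"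

lemma orth_unit: assumes "m \<le> g" "j < 2*g" "j \<notin> Fs g m"
  shows "orth g m (unit_vec (2*g) j :: 'a::field vec)"
  unfolding orth_def using assms by (auto simp: omega_unit sympJ_index Fs_def)

lemma orth_add: "x \<in> carrier_vec (2*g) \<Longrightarrow> y \<in> carrier_vec (2*g) \<Longrightarrow> orth g m x \<Longrightarrow> orth g m y \<Longrightarrow> orth g m (x + y)"
  unfolding orth_def by (simp add: omega_add_right)

lemma orth_minus: "x \<in> carrier_vec (2*g) \<Longrightarrow> y \<in> carrier_vec (2*g) \<Longrightarrow> orth g m x \<Longrightarrow> orth g m y \<Longrightarrow> orth g m (x - y)"
  unfolding orth_def by (simp add: omega_minus_right)

lemma Fix_orth: assumes A: "A \<in> Sp g" and F: "Fixm g m A" and x: "x \<in> carrier_vec (2*g)" and o: "orth g m x"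
  shows "orth g m (A *\<^sub>v x)"
  unfolding orth_def
proof (intro allI impI)
  fix k assume k: "k < 2*g" "k \<in> Fs g m"
  have "omega g (unit_vec (2*g) k) (A *\<^sub>v x) = omega g (A *\<^sub>v unit_vec (2*g) k) (A *\<^sub>v x)"
    using F k unfolding Fixm_def by simp
  also have "\<dots> = omega g (unit_vec (2*g) k) x" using A x by (intro omega_Sp) auto
  also have "\<dots> = 0" using o k unfolding orth_def by simp
  finally show "omega g (unit_vec (2*g) k) (A *\<^sub>v x) = 0" .
qed

lemma transv_fix: assumes v: "v \<in> carrier_vec (2*g)" and o: "orth g m v" and k: "k < 2*g" "k \<in> Fs g m"
  shows "transv g v a *\<^sub>v unit_vec (2*g) k = unit_vec (2*g) k"
proof -
  have "omega g v (unit_vec (2*g) k) = - omega g (unit_vec (2*g) k) v" using v k by (intro omega_skew) auto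
  also have "\<dots> = 0" using o k unfolding orth_def by simp
  finally show ?thesis using v k by (simp add: transv_vec)
qed

lemma Fix_mult: assumes A: "A \<in> Sp g" and F: "Fixm g m A" and v: "v \<in> carrier_vec (2*g)" and o: "orth g m v"
  shows "Fixm g m (transv g v a * A)"
  unfolding Fixm_def
proof (intro allI impI)
  fix k assume k: "k < 2*g" "k \<in> Fs g m"
  have Ac: "A \<in> carrier_mat (2*g) (2*g)" using A by (rule Sp_carrier)
  have "(transv g v a * A) *\<^sub>v unit_vec (2*g) k = transv g v a *\<^sub>v (A *\<^sub>v unit_vec (2*g) k)"
    using Ac by (simp add: assoc_mult_mat_vec[of _ "2*g" "2*g" _ "2*g"])
  also have "\<dots> = unit_vec (2*g) k" using F k transv_fix[OF v o k] unfolding Fixm_def by simp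
  finally show "(transv g v a * A) *\<^sub>v unit_vec (2*g) k = unit_vec (2*g) k" .
qed

lemma mv: assumes u: "u \<in> carrier_vec (2*g)" and z: "z \<in> carrier_vec (2*g)" and nz: "omega g z u \<noteq> 0"
  shows "transv g (z - u) (1 / omega g z u) *\<^sub>v u = z"
proof -
  have zu: "z - u \<in> carrier_vec (2*g)" using u z by simp
  have "omega g (z - u) u = omega g z u" using u z by (simp add: omega_minus_left)
  hence "transv g (z - u) (1 / omega g z u) *\<^sub>v u = u + 1 \<cdot>\<^sub>v (z - u)"
    using nz u zu by (simp add: transv_vec)
  also have "\<dots> = z" using u z by (intro eq_vecI) auto
  finally show ?thesis .
qed

lemma mult_vec_assoc: "A \<in> Sp g \<Longrightarrow> x \<in> carrier_vec (2*g) \<Longrightarrow>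
  (transv g v a * A) *\<^sub>v x = transv g v a *\<^sub>v (A *\<^sub>v x)"
  by (simp add: assoc_mult_mat_vec[of _ "2*g" "2*g" _ "2*g"] Sp_carrier)

locale genK =
  fixes g :: nat and K :: "'a::field mat set"
  assumes KC: "\<And>v a A. v \<in> carrier_vec (2*g) \<Longrightarrow> A \<in> Sp g \<Longrightarrow> transv g v a * A \<in> K \<Longrightarrow> A \<in> K"
    and K1: "1\<^sub>m (2*g) \<in> K"
    and two: "(2::'a) \<noteq> 0"
begin

lemma reach:
  assumes A: "A \<in> Sp g" and F: "Fixm g m A" and m: "m < g"
    and z: "z \<in> carrier_vec (2*g)" and oz: "orth g m z"
    and nz: "omega g z (A *\<^sub>v unit_vec (2*g) m) \<noteq> 0"
    and H: "\<And>B. B \<in> Sp g \<Longrightarrow> Fixm g m B \<Longrightarrow> B *\<^sub>v unit_vec (2*g) m = z \<Longrightarrow> B \<in> K"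
  shows "A \<in> K"
proof -
  define u where "u = A *\<^sub>v unit_vec (2*g) m"
  have Ac: "A \<in> carrier_mat (2*g) (2*g)" using A by (rule Sp_carrier)
  have uc: "u \<in> carrier_vec (2*g)" unfolding u_def using Ac by simp
  have ou: "orth g m u" unfolding u_def
    using m by (intro Fix_orth[OF A F] orth_unit) (auto simp: Fs_def)
  define v where "v = z - u"
  have vc: "v \<in> carrier_vec (2*g)" unfolding v_def using z uc by simp
  have ov: "orth g m v" unfolding v_def by (rule orth_minus[OF z uc oz ou])
  define B where "B = transv g v (1 / omega g z u) * A"
  have BS: "B \<in> Sp g" unfolding B_def by (intro Sp_mult transv_Sp vc A)
  have BF: "Fixm g m B" unfolding B_def by (rule Fix_mult[OF A F vc ov])
  have "B *\<^sub>v unit_vec (2*g) m = transv g v (1 / omega g z u) *\<^sub>v u"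
    unfolding B_def u_def using A m by (simp add: mult_vec_assoc)
  also have "\<dots> = z" unfolding v_def by (rule mv[OF uc z]) (use nz u_def in simp)
  finally have "B \<in> K" using H BS BF by simp
  thus ?thesis unfolding B_def by (rule KC[OF vc A])
qed

lemma reach2:
  assumes A: "A \<in> Sp g" and F: "Fixm g m A" and m: "m < g"
    and Ae: "A *\<^sub>v unit_vec (2*g) m = unit_vec (2*g) m"
    and z: "z \<in> carrier_vec (2*g)" and oz: "orth g m z"
    and nz: "omega g z (A *\<^sub>v unit_vec (2*g) (g+m)) \<noteq> 0"
    and ze: "omega g (z - A *\<^sub>v unit_vec (2*g) (g+m)) (unit_vec (2*g) m) = 0"
    and H: "\<And>B. B \<in> Sp g \<Longrightarrow> Fixm g m B \<Longrightarrow> B *\<^sub>v unit_vec (2*g) m = unit_vec (2*g) m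
             \<Longrightarrow> B *\<^sub>v unit_vec (2*g) (g+m) = z \<Longrightarrow> B \<in> K"
  shows "A \<in> K"
proof -
  define u where "u = A *\<^sub>v unit_vec (2*g) (g+m)"
  have Ac: "A \<in> carrier_mat (2*g) (2*g)" using A by (rule Sp_carrier)
  have uc: "u \<in> carrier_vec (2*g)" unfolding u_def using Ac by simp
  have ou: "orth g m u" unfolding u_def
    using m by (intro Fix_orth[OF A F] orth_unit) (auto simp: Fs_def)
  define v where "v = z - u"
  have vc: "v \<in> carrier_vec (2*g)" unfolding v_def using z uc by simp
  have ov: "orth g m v" unfolding v_def by (rule orth_minus[OF z uc oz ou])
  define B where "B = transv g v (1 / omega g z u) * A"
  have BS: "B \<in> Sp g" unfolding B_def by (intro Sp_mult transv_Sp vc A)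
  have BF: "Fixm g m B" unfolding B_def by (rule Fix_mult[OF A F vc ov])
  have "B *\<^sub>v unit_vec (2*g) (g+m) = transv g v (1 / omega g z u) *\<^sub>v u"
    unfolding B_def u_def using A m by (simp add: mult_vec_assoc)
  also have "\<dots> = z" unfolding v_def by (rule mv[OF uc z]) (use nz u_def in simp)
  finally have B1: "B *\<^sub>v unit_vec (2*g) (g+m) = z" .
  have "B *\<^sub>v unit_vec (2*g) m = transv g v (1 / omega g z u) *\<^sub>v unit_vec (2*g) m"
    unfolding B_def using A m Ae by (simp add: mult_vec_assoc)
  also have "\<dots> = unit_vec (2*g) m" using vc m ze unfolding v_def u_def by (simp add: transv_vec)
  finally have "B \<in> K" using H BS BF B1 by simp
  thus ?thesis unfolding B_def by (rule KC[OF vc A])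
qed

lemma fixSuc: assumes F: "Fixm g m B" and e: "B *\<^sub>v unit_vec (2*g) m = unit_vec (2*g) m"
  and f: "B *\<^sub>v unit_vec (2*g) (g+m) = unit_vec (2*g) (g+m)"
  shows "Fixm g (Suc m) B"
  unfolding Fixm_def
proof (intro allI impI)
  fix k assume k: "k < 2*g" "k \<in> Fs g (Suc m)"
  hence "k \<in> Fs g m \<or> k = m \<or> k = g + m" by (auto simp: Fs_def)
  thus "B *\<^sub>v unit_vec (2*g) k = unit_vec (2*g) k" using F e f k unfolding Fixm_def by auto
qed

lemma step2:
  assumes A: "A \<in> Sp g" and F: "Fixm g m A" and m: "m < g"
    and Ae: "A *\<^sub>v unit_vec (2*g) m = unit_vec (2*g) m"
    and P: "\<And>B. B \<in> Sp g \<Longrightarrow> Fixm g (Suc m) B \<Longrightarrow> B \<in> K"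
  shows "A \<in> K"
proof -
  define e where "e = (unit_vec (2*g) m :: 'a vec)"
  define f where "f = (unit_vec (2*g) (g+m) :: 'a vec)"
  define w where "w = A *\<^sub>v f"
  have Ac: "A \<in> carrier_mat (2*g) (2*g)" using A by (rule Sp_carrier)
  have ec: "e \<in> carrier_vec (2*g)" and fc: "f \<in> carrier_vec (2*g)" unfolding e_def f_def by auto
  have wc: "w \<in> carrier_vec (2*g)" unfolding w_def using Ac fc by simp
  have oe: "orth g m e" unfolding e_def using m by (intro orth_unit) (auto simp: Fs_def)
  have of: "orth g m f" unfolding f_def using m by (intro orth_unit) (auto simp: Fs_def)
  have ow: "orth g m w" unfolding w_def by (rule Fix_orth[OF A F fc of])
  have ef: "omega g e f = 1" unfolding e_def f_def using m by (simp add: omega_unit sympJ_index)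
  have fe: "omega g f e = -1" unfolding e_def f_def using m by (simp add: omega_unit sympJ_index)
  have ee: "omega g e e = 0" using ec by simp
  have ew: "omega g e w = 1" unfolding w_def using omega_Sp[OF A ec fc] Ae ef e_def by simp
  have we: "omega g w e = -1" using omega_skew[OF ec wc] ew by simp
  have fin: "B \<in> K" if BS: "B \<in> Sp g" and BF: "Fixm g m B" and Be: "B *\<^sub>v e = e" and Bf: "B *\<^sub>v f = f" for B
    using P[OF BS fixSuc[OF BF]] Be Bf unfolding e_def f_def by simp
  have cf: "B \<in> K" if BS: "B \<in> Sp g" and BF: "Fixm g m B" and Be: "B *\<^sub>v e = e"
     and nz: "omega g f (B *\<^sub>v f) \<noteq> 0" and z0: "omega g (f - B *\<^sub>v f) e = 0" for B
    by (rule reach2[OF BS BF m _ fc of]) (use Be nz z0 fin e_def f_def in auto)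
  show ?thesis
  proof (cases "omega g f w = 0")
    case False
    have "omega g (f - w) e = 0" using fc wc ec fe we by (simp add: omega_minus_left)
    thus ?thesis using cf[OF A F] Ae False unfolding e_def w_def by simp
  next
    case True
    have zc: "w + e \<in> carrier_vec (2*g)" using wc ec by simp
    have oz: "orth g m (w + e)" by (rule orth_add[OF wc ec ow oe])
    have nz: "omega g (w + e) w \<noteq> 0" using wc ec ew by (simp add: omega_add_left)
    have z0: "omega g (w + e - w) e = 0" using wc ec zc we by (simp add: omega_minus_left omega_add_left)
    have H: "B \<in> K" if BS: "B \<in> Sp g" and BF: "Fixm g m B" and Be: "B *\<^sub>v e = e" and Bf: "B *\<^sub>v f = w + e" for B
    proof (rule cf[OF BS BF Be])
      show "omega g f (B *\<^sub>v f) \<noteq> 0" using Bf fc wc ec True fe by (simp add: omega_add_right)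
      show "omega g (f - B *\<^sub>v f) e = 0" using Bf fc wc ec fe we zc by (simp add: omega_minus_left omega_add_left)
    qed
    show ?thesis
      by (rule reach2[OF A F m Ae zc oz]) (use nz z0 H e_def f_def w_def in auto)
  qed
qed

lemma step1:
  assumes A: "A \<in> Sp g" and F: "Fixm g m A" and m: "m < g"
    and P: "\<And>B. B \<in> Sp g \<Longrightarrow> Fixm g (Suc m) B \<Longrightarrow> B \<in> K"
  shows "A \<in> K"
proof -
  define e where "e = (unit_vec (2*g) m :: 'a vec)"
  define f where "f = (unit_vec (2*g) (g+m) :: 'a vec)"
  define u where "u = A *\<^sub>v e"
  define w where "w = A *\<^sub>v f"
  have Ac: "A \<in> carrier_mat (2*g) (2*g)" using A by (rule Sp_carrier)
  have ec: "e \<in> carrier_vec (2*g)" and fc: "f \<in> carrier_vec (2*g)" unfolding e_def f_def by auto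
  have wc: "w \<in> carrier_vec (2*g)" unfolding w_def using Ac fc by simp
  have uc: "u \<in> carrier_vec (2*g)" unfolding u_def using Ac ec by simp
  have oe: "orth g m e" unfolding e_def using m by (intro orth_unit) (auto simp: Fs_def)
  have of: "orth g m f" unfolding f_def using m by (intro orth_unit) (auto simp: Fs_def)
  have ow: "orth g m w" unfolding w_def by (rule Fix_orth[OF A F fc of])
  have ef: "omega g e f = 1" unfolding e_def f_def using m by (simp add: omega_unit sympJ_index)
  have uw: "omega g u w = 1" unfolding w_def u_def using omega_Sp[OF A ec fc] ef by simp
  have wu: "omega g w u = -1" using omega_skew[OF uc wc] uw by simp
  have E: "B \<in> K" if BS: "B \<in> Sp g" and BF: "Fixm g m B" and Be: "B *\<^sub>v e = e" for B
    by (rule step2[OF BS BF m _ P]) (use Be e_def in auto)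
  have Z: "A \<in> K" if zc: "z \<in> carrier_vec (2*g)" and oz: "orth g m z" and nz1: "omega g z u \<noteq> 0"
     and nz2: "omega g e z \<noteq> 0" for z
  proof (rule reach[OF A F m zc oz])
    show "omega g z (A *\<^sub>v unit_vec (2*g) m) \<noteq> 0" using nz1 u_def e_def by simp
    fix B assume BS: "B \<in> Sp g" and BF: "Fixm g m B" and Bz: "B *\<^sub>v unit_vec (2*g) m = z"
    show "B \<in> K"
      by (rule reach[OF BS BF m ec oe]) (use Bz nz2 E e_def in auto)
  qed
  show ?thesis
  proof (cases "omega g e u = 0")
    case False
    show ?thesis by (rule reach[OF A F m ec oe]) (use False E u_def e_def in auto)
  next
    case True
    show ?thesis
    proof (cases "omega g f u = 0")
      case False
      show ?thesis by (rule Z[OF fc of False]) (use fc ec ef in simp)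
    next
      case fu: True
      show ?thesis
      proof (cases "omega g e w = -1")
        case False
        have zc: "f + w \<in> carrier_vec (2*g)" using fc wc by simp
        show ?thesis
        proof (rule Z[OF zc orth_add[OF fc wc of ow]])
          show "omega g (f + w) u \<noteq> 0" using fc wc uc fu wu by (simp add: omega_add_left)
          have "omega g e (f + w) = 1 + omega g e w" using fc wc ec ef by (simp add: omega_add_right)
          thus "omega g e (f + w) \<noteq> 0" using False by (metis add_eq_0_iff)
        qed
      next
        case ew: True
        have zc: "f - w \<in> carrier_vec (2*g)" using fc wc by simp
        show ?thesis
        proof (rule Z[OF zc orth_minus[OF fc wc of ow]])
          show "omega g (f - w) u \<noteq> 0" using fc wc uc fu wu by (simp add: omega_minus_left)
          show "omega g e (f - w) \<noteq> 0" using fc wc ec ef ew two by (simp add: omega_minus_right)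
        qed
      qed
    qed
  qed
qed

lemma fix_all_one: assumes A: "(A::'b::field mat) \<in> Sp g" and F: "Fixm g g A" shows "A = 1\<^sub>m (2*g)"
proof (rule mat_col_eqI)
  have Ac: "A \<in> carrier_mat (2*g) (2*g)" using A by (rule Sp_carrier)
  fix j assume "j < dim_col (1\<^sub>m (2*g) :: 'b::field mat)"
  hence j: "j < 2*g" by simp
  have "col A j = A *\<^sub>v unit_vec (2*g) j" using mult_unit_col[OF Ac j] by simp
  also have "\<dots> = unit_vec (2*g) j" using F j unfolding Fixm_def Fs_def by auto
  finally show "col A j = col (1\<^sub>m (2*g)) j" using j by simp
qed (use A Sp_carrier in auto)

lemma gen_ind: assumes "m \<le> g" shows "\<forall>A. A \<in> Sp g \<longrightarrow> Fixm g m A \<longrightarrow> A \<in> K"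
  using assms
proof (induction m rule: inc_induct)
  case base
  then show ?case using fix_all_one K1 by auto
next
  case (step m)
  then show ?case using step1 by blast
qed

theorem Sp_sub_K: "A \<in> Sp g \<Longrightarrow> A \<in> K"
proof -
  assume "A \<in> Sp g"
  moreover have "Fixm g 0 A" unfolding Fixm_def Fs_def by auto
  ultimately show "A \<in> K" using gen_ind[of 0] by blast
qed

end


section \<open>GSp\<close>

lemma one_smult_mat'[simp]: "(1::'a::field) \<cdot>\<^sub>m A = A"
  by (intro eq_matI) auto

lemma smult_mat_vec: assumes A: "(A::'a::field mat) \<in> carrier_mat n n" and y: "y \<in> carrier_vec n"
  shows "(c \<cdot>\<^sub>m A) *\<^sub>v y = c \<cdot>\<^sub>v (A *\<^sub>v y)"
proof (rule eq_vecI)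
  fix i assume "i < dim_vec (c \<cdot>\<^sub>v (A *\<^sub>v y))"
  hence i: "i < n" using A by simp
  have "((c \<cdot>\<^sub>m A) *\<^sub>v y) $ i = (c \<cdot>\<^sub>v row A i) \<bullet> y" using A i by simp
  also have "\<dots> = c * (row A i \<bullet> y)" using A y i by (intro smult_scalar_prod_distrib[of _ n]) auto
  finally show "((c \<cdot>\<^sub>m A) *\<^sub>v y) $ i = (c \<cdot>\<^sub>v (A *\<^sub>v y)) $ i" using A i by simp
qed (use A in simp)

lemma GS_iff: assumes A: "A \<in> carrier_mat (2*g) (2*g)"
  shows "transpose_mat A * sympJ g * A = c \<cdot>\<^sub>m sympJ g \<longleftrightarrow>
     (\<forall>i<2*g. \<forall>j<2*g. omega g (col A i) (col A j) = c * (sympJ g $$ (i,j) :: 'a::field))"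
proof
  assume h: "transpose_mat A * sympJ g * A = c \<cdot>\<^sub>m sympJ g"
  show "\<forall>i<2*g. \<forall>j<2*g. omega g (col A i) (col A j) = c * sympJ g $$ (i,j)"
  proof (intro allI impI)
    fix i j assume i: "i < 2*g" and j: "j < 2*g"
    have "omega g (col A i) (col A j) = (transpose_mat A * sympJ g * A) $$ (i,j)" using STJ_entry[OF A i j] by simp
    also have "\<dots> = c * sympJ g $$ (i,j)" using h i j by simp
    finally show "omega g (col A i) (col A j) = c * sympJ g $$ (i,j)" .
  qed
next
  assume h: "\<forall>i<2*g. \<forall>j<2*g. omega g (col A i) (col A j) = c * (sympJ g $$ (i,j) :: 'a::field)"
  show "transpose_mat A * sympJ g * A = c \<cdot>\<^sub>m sympJ g"
    using A by (intro eq_matI) (simp_all del: index_mult_mat add: index_mult_mat(2,3) STJ_entry[OF A] h carrier_matD)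
qed

lemma omega_GS: assumes Ac: "A \<in> carrier_mat (2*g) (2*g)" and h: "transpose_mat A * sympJ g * A = c \<cdot>\<^sub>m sympJ g"
  and x: "x \<in> carrier_vec (2*g)" and y: "y \<in> carrier_vec (2*g)"
  shows "omega g (A *\<^sub>v x) (A *\<^sub>v y) = c * omega g x y"
proof -
  have "omega g (A *\<^sub>v x) (A *\<^sub>v y) = x \<bullet> (transpose_mat A *\<^sub>v (sympJ g *\<^sub>v (A *\<^sub>v y)))"
    unfolding omega_def using Ac x y by (intro scalar_transpose[of _ "2*g"]) auto
  also have "transpose_mat A *\<^sub>v (sympJ g *\<^sub>v (A *\<^sub>v y)) = (transpose_mat A * sympJ g * A) *\<^sub>v y"
    using Ac y by (simp add: assoc_mult_mat_vec[of _ "2*g" "2*g" _ "2*g"])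
  also have "\<dots> = c \<cdot>\<^sub>v (sympJ g *\<^sub>v y)" using h y by (simp add: smult_mat_vec[of _ "2*g"])
  finally show ?thesis unfolding omega_def using x by simp
qed

lemma sympJ_0g: "g \<ge> 1 \<Longrightarrow> sympJ g $$ (0, g) = (1::'a::field)"
  by (simp add: sympJ_index)

lemma smultJ_inj: assumes g: "g \<ge> 1" and h: "c \<cdot>\<^sub>m sympJ g = d \<cdot>\<^sub>m (sympJ g :: 'a::field mat)" shows "c = d"
proof -
  have "(c \<cdot>\<^sub>m sympJ g) $$ (0,g) = (d \<cdot>\<^sub>m (sympJ g :: 'a mat)) $$ (0,g)" using h by simp
  thus ?thesis using g by (simp add: sympJ_0g)
qed

lemma GSp_carrier_iff: "A \<in> GSp_carrier g \<longleftrightarrow> A \<in> carrier_mat (2*g) (2*g) \<and> (\<exists>c. c \<noteq> 0 \<and> transpose_mat A * sympJ g * A = c \<cdot>\<^sub>m sympJ g)"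
  by (simp add: GSp_carrier_def)

lemma carrier_GSp[simp]: "carrier (GSp g) = GSp_carrier g" by (simp add: GSp_def)
lemma mult_GSp[simp]: "x \<otimes>\<^bsub>GSp g\<^esub> y = x * y" by (simp add: GSp_def)

lemma multiplier_eq: assumes g: "g \<ge> 1" and h: "transpose_mat A * sympJ g * A = c \<cdot>\<^sub>m (sympJ g :: 'a::field mat)"
  shows "multiplier g A = c"
  unfolding multiplier_def
proof (rule the_equality)
  show "transpose_mat A * sympJ g * A = c \<cdot>\<^sub>m sympJ g" by (rule h)
  fix d assume "transpose_mat A * sympJ g * A = d \<cdot>\<^sub>m sympJ g"
  thus "d = c" using h smultJ_inj[OF g] by metis
qed

lemma multiplier_spec: assumes g: "g \<ge> 1" and A: "(A::'a::field mat) \<in> GSp_carrier g"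
  shows "transpose_mat A * sympJ g * A = multiplier g A \<cdot>\<^sub>m sympJ g" "multiplier g A \<noteq> 0"
    "A \<in> carrier_mat (2*g) (2*g)"
proof -
  obtain c where c: "c \<noteq> 0" "transpose_mat A * sympJ g * A = c \<cdot>\<^sub>m sympJ g" using A by (auto simp: GSp_carrier_def)
  have "multiplier g A = c" by (rule multiplier_eq[OF g c(2)])
  thus "transpose_mat A * sympJ g * A = multiplier g A \<cdot>\<^sub>m sympJ g" "multiplier g A \<noteq> 0" using c by auto
  show "A \<in> carrier_mat (2*g) (2*g)" using A by (simp add: GSp_carrier_def)
qed

lemma GS_mult: assumes A: "A \<in> carrier_mat (2*g) (2*g)" and B: "B \<in> carrier_mat (2*g) (2*g)"
  and hA: "transpose_mat A * sympJ g * A = a \<cdot>\<^sub>m sympJ g" and hB: "transpose_mat B * sympJ g * B = b \<cdot>\<^sub>m (sympJ g :: 'a::field mat)"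
  shows "transpose_mat (A * B) * sympJ g * (A * B) = (a * b) \<cdot>\<^sub>m sympJ g"
proof -
  have ABc: "A * B \<in> carrier_mat (2*g) (2*g)" using A B by simp
  show ?thesis unfolding GS_iff[OF ABc]
  proof (intro allI impI)
    fix i j assume i: "i < 2*g" and j: "j < 2*g"
    have "omega g (col (A*B) i) (col (A*B) j) = omega g (A *\<^sub>v col B i) (A *\<^sub>v col B j)"
      using A B i j by simp
    also have "\<dots> = a * omega g (col B i) (col B j)" using A B i j by (intro omega_GS[OF A hA]) auto
    also have "omega g (col B i) (col B j) = b * sympJ g $$ (i,j)" using hB B i j by (simp add: GS_iff)
    finally show "omega g (col (A*B) i) (col (A*B) j) = (a * b) * sympJ g $$ (i,j)" by simp
  qed
qed

lemma GSp_mult: assumes g: "g \<ge> 1" and A: "(A::'a::field mat) \<in> GSp_carrier g" and B: "B \<in> GSp_carrier g"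
  shows "A * B \<in> GSp_carrier g" "multiplier g (A * B) = multiplier g A * multiplier g B"
proof -
  have h: "transpose_mat (A * B) * sympJ g * (A * B) = (multiplier g A * multiplier g B) \<cdot>\<^sub>m sympJ g"
    using multiplier_spec[OF g A] multiplier_spec[OF g B] by (intro GS_mult) auto
  show "A * B \<in> GSp_carrier g" using h multiplier_spec[OF g A] multiplier_spec[OF g B]
    by (auto simp: GSp_carrier_def intro!: exI[of _ "multiplier g A * multiplier g B"])
  show "multiplier g (A * B) = multiplier g A * multiplier g B" by (rule multiplier_eq[OF g h])
qed

lemma GS_smult: assumes A: "A \<in> carrier_mat (2*g) (2*g)"
  and hA: "transpose_mat A * sympJ g * A = a \<cdot>\<^sub>m (sympJ g :: 'a::field mat)"
  shows "transpose_mat (c \<cdot>\<^sub>m A) * sympJ g * (c \<cdot>\<^sub>m A) = (c * c * a) \<cdot>\<^sub>m sympJ g"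
proof -
  have cA: "c \<cdot>\<^sub>m A \<in> carrier_mat (2*g) (2*g)" using A by simp
  show ?thesis unfolding GS_iff[OF cA]
  proof (intro allI impI)
    fix i j assume i: "i < 2*g" and j: "j < 2*g"
    have "omega g (col (c \<cdot>\<^sub>m A) i) (col (c \<cdot>\<^sub>m A) j) = c * c * omega g (col A i) (col A j)"
      using A i j by (simp add: omega_smult_left omega_smult_right)
    also have "omega g (col A i) (col A j) = a * sympJ g $$ (i,j)" using hA A i j by (simp add: GS_iff)
    finally show "omega g (col (c \<cdot>\<^sub>m A) i) (col (c \<cdot>\<^sub>m A) j) = (c * c * a) * sympJ g $$ (i,j)" by simp
  qed
qed

lemma GSp_smult: assumes g: "g \<ge> 1" and A: "(A::'a::field mat) \<in> GSp_carrier g" and c: "c \<noteq> 0"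
  shows "c \<cdot>\<^sub>m A \<in> GSp_carrier g" "multiplier g (c \<cdot>\<^sub>m A) = c * c * multiplier g A"
proof -
  have h: "transpose_mat (c \<cdot>\<^sub>m A) * sympJ g * (c \<cdot>\<^sub>m A) = (c * c * multiplier g A) \<cdot>\<^sub>m sympJ g"
    using multiplier_spec[OF g A] by (intro GS_smult) auto
  show "c \<cdot>\<^sub>m A \<in> GSp_carrier g" using h multiplier_spec[OF g A] c
    by (auto simp: GSp_carrier_def intro!: exI[of _ "c * c * multiplier g A"])
  show "multiplier g (c \<cdot>\<^sub>m A) = c * c * multiplier g A" by (rule multiplier_eq[OF g h])
qed

lemma Sp_GSp: assumes g: "g \<ge> 1" and A: "(A::'a::field mat) \<in> Sp g"
  shows "A \<in> GSp_carrier g" "multiplier g A = 1"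
proof -
  have h: "transpose_mat A * sympJ g * A = 1 \<cdot>\<^sub>m sympJ g" using A by (simp add: Sp_def)
  show "A \<in> GSp_carrier g" using h A by (auto simp: GSp_carrier_def Sp_def intro!: exI[of _ 1])
  show "multiplier g A = 1" by (rule multiplier_eq[OF g h])
qed

lemma GSp_Sp: assumes g: "g \<ge> 1" and A: "(A::'a::field mat) \<in> GSp_carrier g" and m: "multiplier g A = 1"
  shows "A \<in> Sp g"
  using multiplier_spec[OF g A] m by (simp add: Sp_def)

definition Dm :: "nat \<Rightarrow> 'a::field \<Rightarrow> 'a mat" where
  "Dm g c = mat (2*g) (2*g) (\<lambda>(i,j). if i = j then (if i < g then 1 else c) else 0)"

lemma Dm_carrier[simp]: "Dm g c \<in> carrier_mat (2*g) (2*g)" by (simp add: Dm_def)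

lemma col_Dm: "j < 2*g \<Longrightarrow> col (Dm g c) j = (if j < g then 1 else c) \<cdot>\<^sub>v unit_vec (2*g) j"
  by (intro eq_vecI) (auto simp: Dm_def)

lemma Dm_GS: "transpose_mat (Dm g c) * sympJ g * Dm g c = c \<cdot>\<^sub>m sympJ g"
  unfolding GS_iff[OF Dm_carrier]
proof (intro allI impI)
  fix i j assume i: "i < 2*g" and j: "j < 2*g"
  show "omega g (col (Dm g c) i) (col (Dm g c) j) = c * sympJ g $$ (i,j)"
    using i j by (simp add: col_Dm omega_smult_left omega_smult_right omega_unit sympJ_index)
qed

lemma Dm_GSp: assumes g: "g \<ge> 1" and c: "(c::'a::field) \<noteq> 0"
  shows "Dm g c \<in> GSp_carrier g" "multiplier g (Dm g c) = c"
  using Dm_GS[of g c] c multiplier_eq[OF g] by (auto simp: GSp_carrier_def)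

lemma Dm_mult: "Dm g c * Dm g d = Dm g (c * (d::'a::field))"
proof (rule mat_col_eqI)
  fix j assume "j < dim_col (Dm g (c * d))"
  hence j: "j < 2*g" by (simp add: Dm_def)
  have "col (Dm g c * Dm g d) j = Dm g c *\<^sub>v col (Dm g d) j" using j by (simp add: col_mult2[of _ "2*g" "2*g" _ "2*g"])
  also have "\<dots> = col (Dm g (c * d)) j" using j
    by (simp add: col_Dm mult_mat_vec[of _ "2*g" "2*g"] mult_unit_col[of _ "2*g" "2*g"] smult_smult_assoc) (simp add: mult.commute)
  finally show "col (Dm g c * Dm g d) j = col (Dm g (c * d)) j" .
qed (simp_all add: Dm_def)

lemma Dm_one: "Dm g (1::'a::field) = 1\<^sub>m (2*g)"
  by (intro eq_matI) (auto simp: Dm_def)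


lemma self_neg: assumes e: "(x::'a::field) = - x" and two: "(2::'a) \<noteq> 0" shows "x = 0"
proof -
  have "2 * x = x + x" by (rule mult_2)
  also have "x + x = x + - x" using e by (rule arg_cong)
  also have "\<dots> = 0" by (rule add.right_inverse)
  finally show ?thesis using two by simp
qed

lemma neg_ne: assumes g: "g \<ge> 1" and two: "(2::'a::field) \<noteq> 0" and A: "(A::'a mat) \<in> GSp_carrier g"
  shows "A \<noteq> - A"
proof
  assume h: "A = - A"
  have Ac: "A \<in> carrier_mat (2*g) (2*g)" using multiplier_spec(3)[OF g A] .
  have z: "A $$ (i,j) = 0" if "i < 2*g" "j < 2*g" for i j
  proof (rule self_neg[OF _ two])
    have "A $$ (i,j) = (- A) $$ (i,j)" by (rule arg_cong[OF h])
    also have "\<dots> = - (A $$ (i,j))" using Ac that by (simp only: index_uminus_mat carrier_matD)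
    finally show "A $$ (i,j) = - (A $$ (i,j))" .
  qed
  have g0: "0 < 2*g" "g < 2*g" using g by auto
  have cc: "col A 0 \<in> carrier_vec (2*g)" "col A g \<in> carrier_vec (2*g)" using Ac by (auto intro!: carrier_vecI)
  have "multiplier g A * sympJ g $$ (0,g) = (transpose_mat A * sympJ g * A) $$ (0,g)"
    using multiplier_spec(1)[OF g A] g0 by simp
  also have "\<dots> = omega g (col A 0) (col A g)" by (rule STJ_entry[OF Ac g0])
  also have "omega g (col A 0) (col A g) = 0" using Ac g0 by (subst omega_explicit[OF cc]) (auto simp: z intro!: sum.neutral)
  finally have "multiplier g A * sympJ g $$ (0,g) = 0" .
  thus False using multiplier_spec(2)[OF g A] sympJ_0g[OF g, where 'a='a] by simp
qed

lemma GSp_dims[simp]: "A \<in> GSp_carrier g \<Longrightarrow> dim_row A = 2*g" "A \<in> GSp_carrier g \<Longrightarrow> dim_col A = 2*g"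
  by (auto simp: GSp_carrier_def dest: carrier_matD)

lemma Sp_dims[simp]: "A \<in> Sp g \<Longrightarrow> dim_row A = 2*g" "A \<in> Sp g \<Longrightarrow> dim_col A = 2*g"
  by (auto simp: Sp_def dest: carrier_matD)

lemma dim_Dm[simp]: "dim_row (Dm g c) = 2*g" "dim_col (Dm g c) = 2*g"
  by (simp_all add: Dm_def)

lemma one_GSp: "g \<ge> 1 \<Longrightarrow> (1\<^sub>m (2*g) :: 'a::field mat) \<in> GSp_carrier g"
  using Dm_GSp[of g "1::'a"] by (simp add: Dm_one)



locale sig =
  fixes g :: nat and \<sigma> :: "'a::field mat \<Rightarrow> 'a mat"
  assumes g: "g \<ge> 1" and two: "(2::'a) \<noteq> 0" and hom: "\<sigma> \<in> hom (GSp g) (GSp g)"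
    and pm: "\<And>A. A \<in> GSp_carrier g \<Longrightarrow> \<sigma> A = A \<or> \<sigma> A = - A"
begin

lemma smult: "A \<in> GSp_carrier g \<Longrightarrow> B \<in> GSp_carrier g \<Longrightarrow> \<sigma> (A * B) = \<sigma> A * \<sigma> B"
  using hom unfolding hom_def by simp

lemma sq: assumes X: "X \<in> GSp_carrier g" shows "\<sigma> (X * X) = X * X"
  using pm[OF X] smult[OF X X] X by auto

definition K where "K = {A \<in> GSp_carrier g. \<sigma> A = A}"

lemma sigma_one: "\<sigma> (1\<^sub>m (2*g)) = 1\<^sub>m (2*g)"
  using sq[OF one_GSp[OF g]] by simp

lemma genK: "genK g K"
proof
  show "1\<^sub>m (2*g) \<in> K" unfolding K_def using one_GSp[OF g] sigma_one by simp
  show "(2::'a) \<noteq> 0" by (rule two)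
  fix v a A assume v: "v \<in> carrier_vec (2*g)" and A: "A \<in> Sp g" and TA: "transv g v a * A \<in> K"
  define S where "S = transv g v (a/2)"
  have "a/2 + a/2 = a" using two by (simp add: field_simps)
  hence TS: "transv g v a = S * S" unfolding S_def using transv_add[OF v] by metis
  have SG: "S \<in> GSp_carrier g" unfolding S_def by (rule Sp_GSp[OF g transv_Sp[OF v]])
  have TG: "transv g v a \<in> GSp_carrier g" by (rule Sp_GSp[OF g transv_Sp[OF v]])
  have AG: "A \<in> GSp_carrier g" by (rule Sp_GSp[OF g A])
  have sT: "\<sigma> (transv g v a) = transv g v a" using sq[OF SG] TS by simp
  have "\<sigma> (transv g v a * A) = transv g v a * A" using TA unfolding K_def by simp
  hence e: "transv g v a * \<sigma> A = transv g v a * A" using smult[OF TG AG] sT by simp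
  have "\<sigma> A = A"
  proof (rule ccontr)
    assume "\<sigma> A \<noteq> A"
    hence "\<sigma> A = - A" using pm[OF AG] by simp
    hence "transv g v a * A = - (transv g v a * A)" using e A by simp
    thus False using neg_ne[OF g two GSp_mult(1)[OF g TG AG]] by simp
  qed
  thus "A \<in> K" unfolding K_def using AG by simp
qed

lemma Sp_fix: "A \<in> Sp g \<Longrightarrow> \<sigma> A = A"
  using genK.Sp_sub_K[OF genK] unfolding K_def by blast

definition s where "s c = (\<sigma> (Dm g c) = Dm g c)"

lemma sigma_Dm: "c \<noteq> 0 \<Longrightarrow> \<sigma> (Dm g c) = (if s c then Dm g c else - Dm g c)"
  using pm[OF Dm_GSp(1)[OF g]] unfolding s_def by auto

lemma sigma_A: assumes A: "A \<in> GSp_carrier g"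
  shows "\<sigma> A = (if s (multiplier g A) then A else - A)"
proof -
  define c where "c = multiplier g A"
  have c: "c \<noteq> 0" unfolding c_def using multiplier_spec[OF g A] by simp
  have Ac: "A \<in> carrier_mat (2*g) (2*g)" using multiplier_spec[OF g A] by simp
  have D1: "Dm g (1/c) \<in> GSp_carrier g" using c by (simp add: Dm_GSp[OF g])
  define B where "B = Dm g (1/c) * A"
  have BG: "B \<in> GSp_carrier g" unfolding B_def by (rule GSp_mult(1)[OF g D1 A])
  have "multiplier g B = 1" unfolding B_def using GSp_mult(2)[OF g D1 A] Dm_GSp(2)[OF g, of "1/c"] c c_def by simp
  hence sB: "\<sigma> B = B" using Sp_fix GSp_Sp[OF g BG] by simp
  have "Dm g c * B = (Dm g c * Dm g (1/c)) * A" unfolding B_def using Ac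
    by (simp add: assoc_mult_mat[of _ "2*g" "2*g" _ "2*g" _ "2*g"])
  also have "\<dots> = A" using c Ac by (simp add: Dm_mult Dm_one)
  finally have AB: "A = Dm g c * B" by simp
  have "\<sigma> A = \<sigma> (Dm g c) * B" using smult[OF Dm_GSp(1)[OF g c] BG] sB AB by simp
  also have "\<dots> = (if s c then A else - A)" using sigma_Dm[OF c] AB BG by simp
  finally show ?thesis unfolding c_def .
qed

lemma s_mult: assumes c: "c \<noteq> 0" and d: "d \<noteq> 0" shows "s (c * d) \<longleftrightarrow> (s c \<longleftrightarrow> s d)"
proof -
  have cd: "c * d \<noteq> 0" using c d by simp
  have G: "Dm g (c*d) \<in> GSp_carrier g" using Dm_GSp[OF g cd] by simp
  have "\<sigma> (Dm g (c*d)) = \<sigma> (Dm g c) * \<sigma> (Dm g d)"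
    using smult[OF Dm_GSp(1)[OF g c] Dm_GSp(1)[OF g d]] by (simp add: Dm_mult)
  also have "\<dots> = (if (s c \<longleftrightarrow> s d) then Dm g (c*d) else - Dm g (c*d))"
    using sigma_Dm[OF c] sigma_Dm[OF d] by (auto simp: Dm_mult)
  finally show ?thesis using neg_ne[OF g two G] unfolding s_def by auto
qed

lemma s_sq: "d \<noteq> 0 \<Longrightarrow> s (d * d)"
  using s_mult by simp

end



lemma ofint_eq_cong:
  "(of_int x = (of_int y :: 'p::prime_card mod_ring)) \<longleftrightarrow> [x = y] (mod int CARD('p))"
proof -
  have "(of_int x = (of_int y :: 'p mod_ring)) \<longleftrightarrow> of_int (x - y) = (0::'p mod_ring)" by simp
  also have "\<dots> \<longleftrightarrow> int CHAR('p mod_ring) dvd (x - y)" by (rule of_int_eq_0_iff_char_dvd)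
  also have "\<dots> \<longleftrightarrow> [x = y] (mod int CARD('p))" by (simp add: cong_iff_dvd_diff)
  finally show ?thesis .
qed

lemma euler_mod_ring:
  fixes c :: "'p::prime_card mod_ring"
  assumes "c \<noteq> 0" "c ^ ((CARD('p) - 1) div 2) = 1" "CARD('p) > 2"
  shows "\<exists>d. c = d * d"
proof -
  define P where "P = CARD('p)"
  define p where "p = int CARD('p)"
  have pP: "p = int P" unfolding p_def P_def by simp
  have pp: "prime P" "2 < P" using prime_card assms(3) unfolding P_def by auto
  have pp2: "2 < p" using pp pP by simp
  define a where "a = to_int_mod_ring c"
  have ca: "c = of_int a" unfolding a_def by (simp add: of_int_of_int_mod_ring)
  have e: "[Legendre a p = a ^ ((P - 1) div 2)] (mod p)"
    using euler_criterion[OF pp] pP by simp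
  hence "of_int (a ^ ((P - 1) div 2)) = (1 :: 'p mod_ring)" using assms(2) ca P_def by simp
  hence "[a ^ ((P - 1) div 2) = 1] (mod p)" using ofint_eq_cong[of _ 1] unfolding p_def by (metis of_int_1)
  hence L: "[Legendre a p = 1] (mod p)" using e cong_trans by blast
  have "\<not> [a = 0] (mod p)" using assms(1) ca ofint_eq_cong[of a 0] unfolding p_def by auto
  moreover have "\<not> [-1 = 1] (mod p)"
  proof
    assume "[-1 = 1] (mod p)" hence "p dvd 2" by (simp add: cong_iff_dvd_diff) 
    thus False using pp2 zdvd_imp_le by fastforce
  qed
  ultimately have "QuadRes p a" using L unfolding Legendre_def by (auto split: if_splits)
  then obtain y where "[y^2 = a] (mod p)" unfolding QuadRes_def by auto
  hence "of_int (y^2) = c" using ofint_eq_cong ca unfolding p_def by blast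
  thus ?thesis by (intro exI[of _ "of_int y"]) (simp add: power2_eq_square)
qed



lemma smult_smult_mat': "a \<cdot>\<^sub>m (b \<cdot>\<^sub>m (A::'a::field mat)) = (a * b) \<cdot>\<^sub>m A"
  by (intro eq_matI) auto

lemma neg_one_smult_mat: "(-1::'a::field) \<cdot>\<^sub>m A = - A"
  by (intro eq_matI) auto

lemma coset_pm: assumes A: "A \<in> GSp_carrier g"
  shows "r_coset (GSp g) (pmI g) A = {A, - (A :: 'a::field mat)}"
proof -
  have Ac: "A \<in> carrier_mat (2*g) (2*g)" using A by (auto simp: GSp_carrier_def)
  have "r_coset (GSp g) (pmI g) A = {1\<^sub>m (2*g) * A, (- 1\<^sub>m (2*g)) * A}"
    unfolding r_coset_def pmI_def by auto
  also have "\<dots> = {A, - A}" using Ac by simp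
  finally show ?thesis .
qed

context
  fixes g :: nat
  assumes g: "g \<ge> 1" and P5: "CARD('p::prime_card) \<ge> 5"
begin


lemma two_ne: "(2::'p mod_ring) \<noteq> 0"
proof
  assume "(2::'p mod_ring) = 0"
  hence "(of_nat 2 :: 'p mod_ring) = 0" by simp
  hence "CHAR('p mod_ring) dvd 2" by (rule of_nat_eq_0_iff_char_dvd[THEN iffD1])
  hence "CARD('p) dvd 2" by simp
  thus False using P5 by (auto dest: dvd_imp_le)
qed

lemma fermat1: assumes c: "(c::'p mod_ring) \<noteq> 0" shows "c ^ (CARD('p) - 1) = 1"
proof -
  obtain n where n: "CARD('p) = Suc n" using P5 by (cases "CARD('p)") auto
  have "c ^ CARD('p) = c" using finite_field_power_card_eq_same[of c] by simp
  hence "c * c ^ n = c" using n by simp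
  hence "c ^ n = 1" using c by simp
  thus ?thesis using n by simp
qed

lemma kk2: "2 * ((CARD('p) - 1) div 2) = CARD('p) - 1"
proof -
  have "odd (CARD('p))" using prime_odd_nat[OF prime_card[where 'a='p]] P5 by simp
  thus ?thesis by presburger
qed

lemma pm1: assumes c: "(c::'p mod_ring) \<noteq> 0" shows "c ^ ((CARD('p) - 1) div 2) = 1 \<or> c ^ ((CARD('p) - 1) div 2) = -1"
proof -
  have "(c ^ ((CARD('p) - 1) div 2))\<^sup>2 = c ^ (2 * ((CARD('p) - 1) div 2))"
    by (simp only: power_mult[symmetric] mult.commute)
  also have "\<dots> = 1" unfolding kk2 by (rule fermat1[OF c])
  finally show ?thesis by (simp add: power2_eq_1_iff)
qed

lemma sq_iff: assumes c: "(c::'p mod_ring) \<noteq> 0" and h: "c ^ ((CARD('p) - 1) div 2) = 1" shows "\<exists>d. d \<noteq> 0 \<and> c = d * d"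
proof -
  obtain d where "c = d * d" using euler_mod_ring[OF c h] P5 by auto
  thus ?thesis using c by auto
qed

abbreviation "X \<equiv> (\<lambda>A. chi g ((CARD('p) - 1) div 2) (A :: 'p mod_ring mat))"

lemma chi_GSp: assumes A: "A \<in> GSp_carrier g"
  shows "X A \<in> GSp_carrier g" "multiplier g (X A) = multiplier g A"
proof -
  have m: "multiplier g A \<noteq> 0" using multiplier_spec(2)[OF g A] .
  have u: "multiplier g A ^ ((CARD('p) - 1) div 2) \<noteq> 0" using m by simp
  have uu: "multiplier g A ^ ((CARD('p) - 1) div 2) * multiplier g A ^ ((CARD('p) - 1) div 2) = 1" using pm1[OF m] by auto
  show "X A \<in> GSp_carrier g" unfolding chi_def by (rule GSp_smult(1)[OF g A u])
  show "multiplier g (X A) = multiplier g A" unfolding chi_def using GSp_smult(2)[OF g A u] uu by simp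
qed

lemma chi_pm: assumes A: "A \<in> GSp_carrier g"
  shows "X A = (if multiplier g A ^ ((CARD('p) - 1) div 2) = 1 then A else - A)"
  using pm1[OF multiplier_spec(2)[OF g A]] by (auto simp: chi_def neg_one_smult_mat)

lemma chi_hom: assumes A: "A \<in> GSp_carrier g" and B: "B \<in> GSp_carrier g"
  shows "X (A * B) = X A * X B"
proof -
  have Ac: "A \<in> carrier_mat (2*g) (2*g)" and Bc: "B \<in> carrier_mat (2*g) (2*g)"
    using multiplier_spec(3)[OF g A] multiplier_spec(3)[OF g B] by auto
  have "X (A * B) = (multiplier g A ^ ((CARD('p) - 1) div 2) * multiplier g B ^ ((CARD('p) - 1) div 2)) \<cdot>\<^sub>m (A * B)"
    unfolding chi_def using GSp_mult(2)[OF g A B] by (simp add: power_mult_distrib)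
  also have "\<dots> = X A * X B" unfolding chi_def using Ac Bc
    by (simp add: mult_smult_assoc_mat[of _ "2*g" "2*g"] mult_smult_distrib[of _ "2*g" "2*g"] smult_smult_mat') (simp add: mult.commute)
  finally show ?thesis .
qed

lemma chi_inv: assumes A: "A \<in> GSp_carrier g" shows "X (X A) = A"
proof -
  have m: "multiplier g A \<noteq> 0" using multiplier_spec(2)[OF g A] .
  have uu: "multiplier g A ^ ((CARD('p) - 1) div 2) * multiplier g A ^ ((CARD('p) - 1) div 2) = 1" using pm1[OF m] by auto
  show ?thesis using chi_GSp(2)[OF A] uu unfolding chi_def by (simp add: smult_smult_mat')
qed

lemma partA: "(\<lambda>A \<in> carrier (GSp g). X A) \<in> auto (GSp g :: 'p mod_ring mat monoid)"
proof -
  let ?f = "\<lambda>A \<in> carrier (GSp g). X A"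
  have hom: "?f \<in> hom (GSp g) (GSp g)" unfolding hom_def
    using chi_GSp(1) GSp_mult(1)[OF g] chi_hom by auto
  have F1: "\<forall>A\<in>GSp_carrier g. X A \<in> GSp_carrier g" using chi_GSp(1) by blast
  have F2: "\<forall>A\<in>GSp_carrier g. X (X A) = A" using chi_inv by blast
  have bij: "bij_betw ?f (GSp_carrier g) (GSp_carrier g)"
    by (rule bij_betwI[where g = ?f]) (use F1 F2 in auto)
  show ?thesis unfolding auto_def Bij_def using hom bij by simp
qed

lemma Psi_iff: "Psi g \<sigma> = (\<lambda>C \<in> carrier (GSp g Mod pmI g). C) \<longleftrightarrow>
   (\<forall>A \<in> GSp_carrier g. \<sigma> ` {A, - A} = {A, - (A :: 'p mod_ring mat)})"
proof
  assume h: "Psi g \<sigma> = (\<lambda>C \<in> carrier (GSp g Mod pmI g). C)"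
  show "\<forall>A \<in> GSp_carrier g. \<sigma> ` {A, - A} = {A, - A}"
  proof
    fix A :: "'p mod_ring mat" assume A: "A \<in> GSp_carrier g"
    have C: "{A, - A} \<in> carrier (GSp g Mod pmI g)"
      unfolding carrier_FactGroup using A coset_pm[OF A] by (auto intro!: image_eqI[of _ _ A])
    have "Psi g \<sigma> {A, -A} = {A, -A}" using h C by simp
    thus "\<sigma> ` {A, - A} = {A, - A}" using C unfolding Psi_def by simp
  qed
next
  assume h: "\<forall>A \<in> GSp_carrier g. \<sigma> ` {A, - A} = {A, - (A :: 'p mod_ring mat)}"
  show "Psi g \<sigma> = (\<lambda>C \<in> carrier (GSp g Mod pmI g). C)"
    unfolding Psi_def
  proof (rule restrict_ext)
    fix C :: "'p mod_ring mat set" assume "C \<in> carrier (GSp g Mod pmI g)"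
    then obtain A where A: "A \<in> GSp_carrier g" and CA: "C = r_coset (GSp g) (pmI g) A"
      unfolding carrier_FactGroup by auto
    show "\<sigma> ` C = C" using h A CA coset_pm[OF A] by simp
  qed
qed

lemma negA: assumes A: "A \<in> GSp_carrier g"
  shows "- A \<in> GSp_carrier g" "multiplier g (- A) = multiplier g (A :: 'p mod_ring mat)"
  using GSp_smult[OF g A, of "-1"] by (simp_all add: neg_one_smult_mat)

lemma partB: assumes \<sigma>: "\<sigma> \<in> auto (GSp g :: 'p mod_ring mat monoid)"
  shows "(\<forall>A \<in> GSp_carrier g. \<sigma> ` {A, - A} = {A, - A}) \<longleftrightarrow>
     ((\<forall>A \<in> GSp_carrier g. \<sigma> A = A) \<or> (\<forall>A \<in> GSp_carrier g. \<sigma> A = X A))"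
proof
  assume "(\<forall>A \<in> GSp_carrier g. \<sigma> A = A) \<or> (\<forall>A \<in> GSp_carrier g. \<sigma> A = X A)"
  thus "\<forall>A \<in> GSp_carrier g. \<sigma> ` {A, - A} = {A, - A}"
  proof
    assume h: "\<forall>A \<in> GSp_carrier g. \<sigma> A = A"
    show ?thesis using h negA(1) by auto
  next
    assume h: "\<forall>A \<in> GSp_carrier g. \<sigma> A = X A"
    show ?thesis
    proof
      fix A :: "'p mod_ring mat" assume A: "A \<in> GSp_carrier g"
      have "\<sigma> A = X A" "\<sigma> (- A) = X (- A)" using h A negA(1)[OF A] by auto
      thus "\<sigma> ` {A, - A} = {A, - A}" using chi_pm[OF A] chi_pm[OF negA(1)[OF A]] negA(2)[OF A]
        by (auto split: if_splits)
    qed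
  qed
next
  assume h: "\<forall>A \<in> GSp_carrier g. \<sigma> ` {A, - A} = {A, - A}"
  have pm: "\<sigma> A = A \<or> \<sigma> A = - A" if "A \<in> GSp_carrier g" for A :: "'p mod_ring mat"
  proof -
    have "\<sigma> A \<in> \<sigma> ` {A, - A}" by simp
    thus ?thesis using h that by auto
  qed
  have hom: "\<sigma> \<in> hom (GSp g) (GSp g)" using \<sigma> unfolding auto_def by simp
  interpret sig g \<sigma> by (unfold_locales) (use g two_ne hom pm in auto)
  show "(\<forall>A \<in> GSp_carrier g. \<sigma> A = A) \<or> (\<forall>A \<in> GSp_carrier g. \<sigma> A = X A)"
  proof (cases "\<forall>c. c \<noteq> 0 \<longrightarrow> s c")
    case True
    have "\<sigma> A = A" if A: "A \<in> GSp_carrier g" for A :: "'p mod_ring mat"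
      using sigma_A[OF A] True multiplier_spec(2)[OF g A] by simp
    thus ?thesis by blast
  next
    case False
    then obtain c0 :: "'p mod_ring" where c0: "c0 \<noteq> 0" "\<not> s c0" by blast
    have c0k: "c0 ^ ((CARD('p) - 1) div 2) = -1"
    proof -
      have "c0 ^ ((CARD('p) - 1) div 2) \<noteq> 1"
      proof
        assume "c0 ^ ((CARD('p) - 1) div 2) = 1"
        then obtain d where "d \<noteq> 0" "c0 = d * d" using sq_iff[OF c0(1)] by blast
        thus False using s_sq c0(2) by simp
      qed
      thus ?thesis using pm1[OF c0(1)] by simp
    qed
    have sk: "s c \<longleftrightarrow> c ^ ((CARD('p) - 1) div 2) = 1" if c: "c \<noteq> 0" for c :: "'p mod_ring"
    proof (cases "c ^ ((CARD('p) - 1) div 2) = 1")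
      case True
      then obtain d where "d \<noteq> 0" "c = d * d" using sq_iff[OF c] by blast
      thus ?thesis using s_sq True by simp
    next
      case False
      hence ck: "c ^ ((CARD('p) - 1) div 2) = -1" using pm1[OF c] by simp
      have cc0: "c * c0 \<noteq> 0" using c c0 by simp
      have "(c * c0) ^ ((CARD('p) - 1) div 2) = 1" using ck c0k by (simp add: power_mult_distrib)
      then obtain d where "d \<noteq> 0" "c * c0 = d * d" using sq_iff[OF cc0] by blast
      hence "s (c * c0)" using s_sq by simp
      hence "\<not> s c" using s_mult[OF c c0(1)] c0(2) by simp
      thus ?thesis using False by simp
    qed
    have "\<sigma> A = X A" if A: "A \<in> GSp_carrier g" for A :: "'p mod_ring mat"
      using sigma_A[OF A] chi_pm[OF A] sk[OF multiplier_spec(2)[OF g A]] by simp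
    thus ?thesis by blast
  qed
qed

end


theorem lemma3p3:
  fixes g :: nat
  assumes "g \<ge> 1" and "CARD('p::prime_card) \<ge> 5"
  shows "(\<lambda>A \<in> carrier (GSp g). chi g ((CARD('p) - 1) div 2) A)
            \<in> auto (GSp g :: 'p mod_ring mat monoid)
       \<and> (\<forall>\<sigma> \<in> auto (GSp g :: 'p mod_ring mat monoid).
            Psi g \<sigma> = (\<lambda>C \<in> carrier (GSp g Mod pmI g). C)
            \<longleftrightarrow> ((\<forall>A \<in> carrier (GSp g). \<sigma> A = A)
                 \<or> (\<forall>A \<in> carrier (GSp g). \<sigma> A = chi g ((CARD('p) - 1) div 2) A)))"
proof
  show "(\<lambda>A \<in> carrier (GSp g). chi g ((CARD('p) - 1) div 2) A) \<in> auto (GSp g :: 'p mod_ring mat monoid)"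
    by (rule partA[OF assms])
  show "\<forall>\<sigma> \<in> auto (GSp g :: 'p mod_ring mat monoid).
            Psi g \<sigma> = (\<lambda>C \<in> carrier (GSp g Mod pmI g). C)
            \<longleftrightarrow> ((\<forall>A \<in> carrier (GSp g). \<sigma> A = A)
                 \<or> (\<forall>A \<in> carrier (GSp g). \<sigma> A = chi g ((CARD('p) - 1) div 2) A))"
  proof
    fix \<sigma> assume s: "\<sigma> \<in> auto (GSp g :: 'p mod_ring mat monoid)"
    show "Psi g \<sigma> = (\<lambda>C \<in> carrier (GSp g Mod pmI g). C)
            \<longleftrightarrow> ((\<forall>A \<in> carrier (GSp g). \<sigma> A = A)
                 \<or> (\<forall>A \<in> carrier (GSp g). \<sigma> A = chi g ((CARD('p) - 1) div 2) A))"
      unfolding carrier_GSp Psi_iff[OF assms, of \<sigma>] by (rule partB[OF assms s])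
  qed
qed

end
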